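(* (1) Let $W_1=W(\gamma_1^{-1})$. Then $W_1\neq\emptyset$ if and only if $\delta_1=0$ and $f_1\le0$, in which case $\widehat W=W_1=\{(\hat y_1,z_1,\hat z_{(1)}^\top)^\top:z_1^2=-f_1/\gamma_1\}$. (2) Suppose $\gamma_q<0$ and let $W_q=W(\gamma_q^{-1})$. Then $W_q\neq\emptyset$ if and only if $\delta_q=0$ and $f_q\ge0$, in which case $\widehat W=W_q=\{(\hat y_q,\hat z_{(q)}^\top,z_q)^\top:z_q^2=f_q/(-\gamma_q)\}$. (Here the first coordinate $\hat y_1$, resp. $\hat y_q$, is absent when $m_0=0$.)
   Context: Regular dimension-reduced canonical form: $q\ge1$, $\gamma_1>\dots>\gamma_q$ nonzero reals with $\gamma_1>0$, $\Gamma^*=\operatorname{diag}(\gamma_1,\dots,\gamma_q)$, $\delta=(\delta_i)$ with $\delta_i\ge0$, $k^*\in\mathbb{R}$, $\varepsilon\ge0$; either ($m_0=0$) $\varepsilon=0$, $w=z\in\mathbb{R}^q$, $w_0=\delta$, $\Delta=\Gamma^*$, $d=0$; or ($m_0>0$) $\varepsilon>0$, $w=(y,z^\top)^\top\in\mathbb{R}^{q+1}$, $w_0=(0,\delta^\top)^\top$, $\Delta=\operatorname{diag}(0,\Gamma^* )$, $d=\varepsilon e_1$. Problem: minimise $\|w-w_0\|^2$ over $W=\{w:Q^*(w)=0\}\neq\emptyset$, $Q^*(w)=w^\top\Delta w+2d^\top w-k^*$; $\widehat W$ is the set of minimisers. $W(\lambda)$ is the set of $w\in W$ with $(I-\lambda\Delta)w=w_0+\lambda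 d$. Boundary quantities: $\hat y_1=\varepsilon\gamma_1^{-1}$, $\hat z_{(1)}\in\mathbb{R}^{q-1}$ with entries $(1-\gamma_i/\gamma_1)^{-1}\delta_i$, $i=2,\dots,q$, $f_1=\sum_{i=2}^q\gamma_i(\hat z_{(1)})_i^2+2\varepsilon\hat y_1-k^*$; when $\gamma_q<0$: $\hat y_q=\varepsilon\gamma_q^{-1}$, $\hat z_{(q)}\in\mathbb{R}^{q-1}$ with entries $(1-\gamma_i/\gamma_q)^{-1}\delta_i$, $i=1,\dots,q-1$, $f_q=\sum_{i=1}^{q-1}\gamma_i(\hat z_{(q)})_i^2+2\varepsilon\hat y_q-k^*$. *)

theory Defs
  imports Complex_Main
begin

text \<open>Coordinates 1..q are the z-coordinates; coordinate 0 is the y-coordinate, present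
  only in the case m0 > 0, which is exactly the case epsilon > 0.  The ambient space
  is the set of vectors vanishing outside the index set (a copy of R^q resp. R^(q+1)).\<close>

definition idxset :: "real \<Rightarrow> nat \<Rightarrow> nat set" where
  "idxset \<epsilon> q = (if \<epsilon> > 0 then {0..q} else {1..q})"

definition wspace :: "real \<Rightarrow> nat \<Rightarrow> (nat \<Rightarrow> real) set" where
  "wspace \<epsilon> q = {w. \<forall>i. i \<notin> idxset \<epsilon> q \<longrightarrow> w i = 0}"

definition Dlt :: "(nat \<Rightarrow> real) \<Rightarrow> nat \<Rightarrow> real" where
  "Dlt \<gamma> i = (if i = 0 then 0 else \<gamma> i)"

definition dvec :: "real \<Rightarrow> nat \<Rightarrow> real" where
  "dvec \<epsilon> i = (if i = 0 then \<epsilon> else 0)"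

definition w0vec :: "(nat \<Rightarrow> real) \<Rightarrow> nat \<Rightarrow> nat \<Rightarrow> real" where
  "w0vec \<delta> q i = (if 1 \<le> i \<and> i \<le> q then \<delta> i else 0)"

definition Qstar :: "(nat \<Rightarrow> real) \<Rightarrow> real \<Rightarrow> real \<Rightarrow> nat \<Rightarrow> (nat \<Rightarrow> real) \<Rightarrow> real" where
  "Qstar \<gamma> \<epsilon> k q w =
     (\<Sum>i\<in>idxset \<epsilon> q. Dlt \<gamma> i * (w i)\<^sup>2) + 2 * (\<Sum>i\<in>idxset \<epsilon> q. dvec \<epsilon> i * w i) - k"

definition Wset :: "(nat \<Rightarrow> real) \<Rightarrow> real \<Rightarrow> real \<Rightarrow> nat \<Rightarrow> (nat \<Rightarrow> real) set" where
  "Wset \<gamma> \<epsilon> k q = {w \<in> wspace \<epsilon> q. Qstar \<gamma> \<epsilon> k q w = 0}"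

definition objf :: "(nat \<Rightarrow> real) \<Rightarrow> real \<Rightarrow> nat \<Rightarrow> (nat \<Rightarrow> real) \<Rightarrow> real" where
  "objf \<delta> \<epsilon> q w = (\<Sum>i\<in>idxset \<epsilon> q. (w i - w0vec \<delta> q i)\<^sup>2)"

definition What :: "(nat \<Rightarrow> real) \<Rightarrow> (nat \<Rightarrow> real) \<Rightarrow> real \<Rightarrow> real \<Rightarrow> nat \<Rightarrow> (nat \<Rightarrow> real) set" where
  "What \<gamma> \<delta> \<epsilon> k q =
     {w \<in> Wset \<gamma> \<epsilon> k q. \<forall>v \<in> Wset \<gamma> \<epsilon> k q. objf \<delta> \<epsilon> q w \<le> objf \<delta> \<epsilon> q v}"

definition Wlam :: "(nat \<Rightarrow> real) \<Rightarrow> (nat \<Rightarrow> real) \<Rightarrow> real \<Rightarrow> real \<Rightarrow> nat \<Rightarrow> real \<Rightarrow> (nat \<Rightarrow> real) set" where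
  "Wlam \<gamma> \<delta> \<epsilon> k q lam =
     {w \<in> Wset \<gamma> \<epsilon> k q. \<forall>i\<in>idxset \<epsilon> q.
        (1 - lam * Dlt \<gamma> i) * w i = w0vec \<delta> q i + lam * dvec \<epsilon> i}"

definition yhat1 :: "(nat \<Rightarrow> real) \<Rightarrow> real \<Rightarrow> real" where
  "yhat1 \<gamma> \<epsilon> = \<epsilon> * inverse (\<gamma> 1)"

definition zhat1 :: "(nat \<Rightarrow> real) \<Rightarrow> (nat \<Rightarrow> real) \<Rightarrow> nat \<Rightarrow> real" where
  "zhat1 \<gamma> \<delta> i = inverse (1 - \<gamma> i / \<gamma> 1) * \<delta> i"

definition f1 :: "(nat \<Rightarrow> real) \<Rightarrow> (nat \<Rightarrow> real) \<Rightarrow> real \<Rightarrow> real \<Rightarrow> nat \<Rightarrow> real" where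
  "f1 \<gamma> \<delta> \<epsilon> k q =
     (\<Sum>i=2..q. \<gamma> i * (zhat1 \<gamma> \<delta> i)\<^sup>2) + 2 * \<epsilon> * yhat1 \<gamma> \<epsilon> - k"

definition yhatq :: "(nat \<Rightarrow> real) \<Rightarrow> real \<Rightarrow> nat \<Rightarrow> real" where
  "yhatq \<gamma> \<epsilon> q = \<epsilon> * inverse (\<gamma> q)"

definition zhatq :: "(nat \<Rightarrow> real) \<Rightarrow> (nat \<Rightarrow> real) \<Rightarrow> nat \<Rightarrow> nat \<Rightarrow> real" where
  "zhatq \<gamma> \<delta> q i = inverse (1 - \<gamma> i / \<gamma> q) * \<delta> i"

definition fq :: "(nat \<Rightarrow> real) \<Rightarrow> (nat \<Rightarrow> real) \<Rightarrow> real \<Rightarrow> real \<Rightarrow> nat \<Rightarrow> real" where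
  "fq \<gamma> \<delta> \<epsilon> k q =
     (\<Sum>i=1..q-1. \<gamma> i * (zhatq \<gamma> \<delta> q i)\<^sup>2) + 2 * \<epsilon> * yhatq \<gamma> \<epsilon> q - k"

end

theory Submission
  imports Defs
begin

lemma fin_idx: "finite (idxset \<epsilon> q)" by (simp add: idxset_def)

lemma Q_form:
  assumes "w \<in> wspace \<epsilon> q" "\<epsilon> \<ge> 0"
  shows "Qstar \<gamma> \<epsilon> k q w = (\<Sum>i=1..q. \<gamma> i * (w i)^2) + 2*\<epsilon>*w 0 - k"
proof (cases "\<epsilon> > 0")
  case True
  have I: "idxset \<epsilon> q = insert 0 {1..q}" using True by (auto simp: idxset_def)
  have a: "(\<Sum>i\<in>insert 0 {1..q}. Dlt \<gamma> i * (w i)^2) = (\<Sum>i=1..q. \<gamma> i * (w i)^2)"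
  proof -
    have "(\<Sum>i\<in>insert 0 {1..q}. Dlt \<gamma> i * (w i)^2) = (\<Sum>i=1..q. Dlt \<gamma> i * (w i)^2)"
      by (simp add: Dlt_def)
    also have "\<dots> = (\<Sum>i=1..q. \<gamma> i * (w i)^2)" by (rule sum.cong) (auto simp: Dlt_def)
    finally show ?thesis .
  qed
  have b: "(\<Sum>i\<in>insert 0 {1..q}. dvec \<epsilon> i * w i) = \<epsilon> * w 0"
  proof -
    have "(\<Sum>i\<in>insert 0 {1..q}. dvec \<epsilon> i * w i) = \<epsilon> * w 0 + (\<Sum>i=1..q. dvec \<epsilon> i * w i)"
      by (simp add: dvec_def)
    also have "(\<Sum>i=1..q. dvec \<epsilon> i * w i) = 0" by (rule sum.neutral) (auto simp: dvec_def)
    finally show ?thesis by simp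
  qed
  show ?thesis unfolding Qstar_def I a b by simp
next
  case False
  then have e0: "\<epsilon> = 0" using assms by simp
  have I: "idxset \<epsilon> q = {1..q}" using False by (simp add: idxset_def)
  have a: "(\<Sum>i\<in>{1..q}. Dlt \<gamma> i * (w i)^2) = (\<Sum>i=1..q. \<gamma> i * (w i)^2)"
    by (rule sum.cong) (auto simp: Dlt_def)
  have b: "(\<Sum>i\<in>{1..q}. dvec \<epsilon> i * w i) = 0" by (rule sum.neutral) (auto simp: dvec_def)
  show ?thesis unfolding Qstar_def I a b using e0 by simp
qed

lemma pt_id:
  fixes a b c l D e :: real
  shows "(a - c)^2 - l*(D*a^2) - 2*l*(e*a) - ((b - c)^2 - l*(D*b^2) - 2*l*(e*b))
     = (1-l*D)*(a-b)^2 + 2*((1-l*D)*b - (c+l*e))*(a-b)"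
  by (simp add: power2_eq_square algebra_simps)

lemma half_id:
  "objf \<delta> \<epsilon> q u - lam * Qstar \<gamma> \<epsilon> k q u
    = (\<Sum>i\<in>idxset \<epsilon> q. (u i - w0vec \<delta> q i)^2 - lam*(Dlt \<gamma> i*(u i)^2) - 2*lam*(dvec \<epsilon> i*u i)) + lam*k"
proof -
  have "(\<Sum>i\<in>idxset \<epsilon> q. (u i - w0vec \<delta> q i)^2 - lam*(Dlt \<gamma> i*(u i)^2) - 2*lam*(dvec \<epsilon> i*u i))
     = (\<Sum>i\<in>idxset \<epsilon> q. (u i - w0vec \<delta> q i)^2) - (\<Sum>i\<in>idxset \<epsilon> q. lam*(Dlt \<gamma> i*(u i)^2))
       - (\<Sum>i\<in>idxset \<epsilon> q. 2*lam*(dvec \<epsilon> i*u i))"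
    by (simp add: sum_subtractf)
  also have "\<dots> = objf \<delta> \<epsilon> q u - lam * (\<Sum>i\<in>idxset \<epsilon> q. Dlt \<gamma> i*(u i)^2)
       - 2*lam*(\<Sum>i\<in>idxset \<epsilon> q. dvec \<epsilon> i*u i)"
    by (simp add: objf_def sum_distrib_left)
  finally show ?thesis unfolding Qstar_def by (simp add: right_diff_distrib distrib_left)
qed

lemma key_id:
  "objf \<delta> \<epsilon> q u - lam * Qstar \<gamma> \<epsilon> k q u - (objf \<delta> \<epsilon> q v - lam * Qstar \<gamma> \<epsilon> k q v)
   = (\<Sum>i\<in>idxset \<epsilon> q. (1 - lam*Dlt \<gamma> i)*(u i - v i)^2
        + 2*((1 - lam*Dlt \<gamma> i)* v i - (w0vec \<delta> q i + lam*dvec \<epsilon> i))*(u i - v i))"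
proof -
  have "objf \<delta> \<epsilon> q u - lam * Qstar \<gamma> \<epsilon> k q u - (objf \<delta> \<epsilon> q v - lam * Qstar \<gamma> \<epsilon> k q v)
    = (\<Sum>i\<in>idxset \<epsilon> q. ((u i - w0vec \<delta> q i)^2 - lam*(Dlt \<gamma> i*(u i)^2) - 2*lam*(dvec \<epsilon> i*u i))
        - ((v i - w0vec \<delta> q i)^2 - lam*(Dlt \<gamma> i*(v i)^2) - 2*lam*(dvec \<epsilon> i*v i)))"
    unfolding half_id by (simp add: sum_subtractf)
  also have "\<dots> = (\<Sum>i\<in>idxset \<epsilon> q. (1 - lam*Dlt \<gamma> i)*(u i - v i)^2
        + 2*((1 - lam*Dlt \<gamma> i)* v i - (w0vec \<delta> q i + lam*dvec \<epsilon> i))*(u i - v i))"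
    by (rule sum.cong[OF refl], rule pt_id)
  finally show ?thesis .
qed

lemma What_eq:
  assumes nn: "\<forall>i\<in>idxset \<epsilon> q. 1 - lam*Dlt \<gamma> i \<ge> 0"
    and ne: "Wlam \<gamma> \<delta> \<epsilon> k q lam \<noteq> {}"
  shows "What \<gamma> \<delta> \<epsilon> k q = Wlam \<gamma> \<delta> \<epsilon> k q lam"
proof -
  obtain v where v: "v \<in> Wlam \<gamma> \<delta> \<epsilon> k q lam" using ne by blast
  have diff: "objf \<delta> \<epsilon> q u - objf \<delta> \<epsilon> q v' = (\<Sum>i\<in>idxset \<epsilon> q. (1 - lam*Dlt \<gamma> i)*(u i - v' i)^2)"
    if u: "u \<in> Wset \<gamma> \<epsilon> k q" and v': "v' \<in> Wlam \<gamma> \<delta> \<epsilon> k q lam" for u v'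
  proof -
    have Qu: "Qstar \<gamma> \<epsilon> k q u = 0" using u by (simp add: Wset_def)
    have Qv: "Qstar \<gamma> \<epsilon> k q v' = 0" using v' by (simp add: Wlam_def Wset_def)
    have c: "\<forall>i\<in>idxset \<epsilon> q. (1 - lam*Dlt \<gamma> i)*v' i = w0vec \<delta> q i + lam*dvec \<epsilon> i"
      using v' by (simp add: Wlam_def)
    have "objf \<delta> \<epsilon> q u - objf \<delta> \<epsilon> q v'
       = objf \<delta> \<epsilon> q u - lam * Qstar \<gamma> \<epsilon> k q u - (objf \<delta> \<epsilon> q v' - lam * Qstar \<gamma> \<epsilon> k q v')"
      using Qu Qv by simp
    also have "\<dots> = (\<Sum>i\<in>idxset \<epsilon> q. (1 - lam*Dlt \<gamma> i)*(u i - v' i)^2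
        + 2*((1 - lam*Dlt \<gamma> i)* v' i - (w0vec \<delta> q i + lam*dvec \<epsilon> i))*(u i - v' i))"
      by (rule key_id)
    also have "\<dots> = (\<Sum>i\<in>idxset \<epsilon> q. (1 - lam*Dlt \<gamma> i)*(u i - v' i)^2)"
      by (rule sum.cong) (use c in auto)
    finally show ?thesis .
  qed
  show ?thesis
  proof
    show "What \<gamma> \<delta> \<epsilon> k q \<subseteq> Wlam \<gamma> \<delta> \<epsilon> k q lam"
    proof
      fix w assume w: "w \<in> What \<gamma> \<delta> \<epsilon> k q"
      have wW: "w \<in> Wset \<gamma> \<epsilon> k q" using w by (simp add: What_def)
      have vW: "v \<in> Wset \<gamma> \<epsilon> k q" using v by (simp add: Wlam_def)
      have "\<forall>u\<in>Wset \<gamma> \<epsilon> k q. objf \<delta> \<epsilon> q w \<le> objf \<delta> \<epsilon> q u"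
        using w unfolding What_def by blast
      then have le: "objf \<delta> \<epsilon> q w \<le> objf \<delta> \<epsilon> q v" using vW by blast
      have s0: "(\<Sum>i\<in>idxset \<epsilon> q. (1 - lam*Dlt \<gamma> i)*(w i - v i)^2) \<le> 0"
        using diff[OF wW v] le by simp
      have nn2: "\<forall>i\<in>idxset \<epsilon> q. (1 - lam*Dlt \<gamma> i)*(w i - v i)^2 \<ge> 0"
      proof
        fix i assume "i \<in> idxset \<epsilon> q"
        then show "(1 - lam*Dlt \<gamma> i)*(w i - v i)^2 \<ge> 0" using nn by (intro mult_nonneg_nonneg) auto
      qed
      have s1: "(\<Sum>i\<in>idxset \<epsilon> q. (1 - lam*Dlt \<gamma> i)*(w i - v i)^2) = 0"
      proof -
        have "0 \<le> (\<Sum>i\<in>idxset \<epsilon> q. (1 - lam*Dlt \<gamma> i)*(w i - v i)^2)"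
          by (rule sum_nonneg) (use nn2 in auto)
        then show ?thesis using s0 by linarith
      qed
      have z: "\<forall>i\<in>idxset \<epsilon> q. (1 - lam*Dlt \<gamma> i)*(w i - v i)^2 = 0"
        using sum_nonneg_eq_0_iff[OF fin_idx, where f="\<lambda>i. (1 - lam*Dlt \<gamma> i)*(w i - v i)^2"] nn2 s1
        by blast
      have c: "\<forall>i\<in>idxset \<epsilon> q. (1 - lam*Dlt \<gamma> i)*v i = w0vec \<delta> q i + lam*dvec \<epsilon> i"
        using v by (simp add: Wlam_def)
      have "\<forall>i\<in>idxset \<epsilon> q. (1 - lam*Dlt \<gamma> i)*w i = w0vec \<delta> q i + lam*dvec \<epsilon> i"
      proof
        fix i assume i: "i \<in> idxset \<epsilon> q"
        have "(1 - lam*Dlt \<gamma> i)*(w i - v i)^2 = 0" using z i by blast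
        then have "1 - lam*Dlt \<gamma> i = 0 \<or> w i = v i" by simp
        then have "(1 - lam*Dlt \<gamma> i)*w i = (1 - lam*Dlt \<gamma> i)*v i" by auto
        then show "(1 - lam*Dlt \<gamma> i)*w i = w0vec \<delta> q i + lam*dvec \<epsilon> i" using c i by simp
      qed
      then show "w \<in> Wlam \<gamma> \<delta> \<epsilon> k q lam" using wW by (simp add: Wlam_def)
    qed
    show "Wlam \<gamma> \<delta> \<epsilon> k q lam \<subseteq> What \<gamma> \<delta> \<epsilon> k q"
    proof
      fix w assume w: "w \<in> Wlam \<gamma> \<delta> \<epsilon> k q lam"
      have wW: "w \<in> Wset \<gamma> \<epsilon> k q" using w by (simp add: Wlam_def)
      have "\<forall>u\<in>Wset \<gamma> \<epsilon> k q. objf \<delta> \<epsilon> q w \<le> objf \<delta> \<epsilon> q u"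
      proof
        fix u assume u: "u \<in> Wset \<gamma> \<epsilon> k q"
        have "0 \<le> (\<Sum>i\<in>idxset \<epsilon> q. (1 - lam*Dlt \<gamma> i)*(u i - w i)^2)"
          by (rule sum_nonneg) (use nn in \<open>intro mult_nonneg_nonneg, auto\<close>)
        then show "objf \<delta> \<epsilon> q w \<le> objf \<delta> \<epsilon> q u" using diff[OF u w] by simp
      qed
      then show "w \<in> What \<gamma> \<delta> \<epsilon> k q" using wW by (simp add: What_def)
    qed
  qed
qed

lemma Wlam_char:
  fixes \<gamma> \<delta> :: "nat \<Rightarrow> real" and \<epsilon> k :: real and q j :: nat
  assumes j: "j \<in> {1..q}" and gj: "\<gamma> j \<noteq> 0" and gd: "\<forall>i\<in>{1..q}-{j}. \<gamma> i \<noteq> \<gamma> j"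
    and eps: "\<epsilon> \<ge> 0"
  defines "F \<equiv> (\<Sum>i\<in>{1..q}-{j}. \<gamma> i * (inverse (1 - \<gamma> i / \<gamma> j) * \<delta> i)^2)
                 + 2*\<epsilon>*(\<epsilon>*inverse(\<gamma> j)) - k"
  shows "Wlam \<gamma> \<delta> \<epsilon> k q (inverse (\<gamma> j)) =
    {w \<in> wspace \<epsilon> q. \<delta> j = 0 \<and> (\<epsilon> > 0 \<longrightarrow> w 0 = \<epsilon> * inverse (\<gamma> j)) \<and>
       (\<forall>i\<in>{1..q}-{j}. w i = inverse (1 - \<gamma> i / \<gamma> j) * \<delta> i) \<and> \<gamma> j * (w j)^2 + F = 0}"
proof (intro set_eqI)
  fix w
  let ?P = "\<lambda>i. (1 - inverse (\<gamma> j) * Dlt \<gamma> i) * w i = w0vec \<delta> q i + inverse (\<gamma> j) * dvec \<epsilon> i"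
  have Pi: "?P i \<longleftrightarrow> (if i = j then \<delta> j = 0 else w i = inverse (1 - \<gamma> i/\<gamma> j) * \<delta> i)"
    if i: "i \<in> {1..q}" for i
  proof -
    have D: "Dlt \<gamma> i = \<gamma> i" "w0vec \<delta> q i = \<delta> i" "dvec \<epsilon> i = 0"
      using i by (auto simp: Dlt_def w0vec_def dvec_def)
    show ?thesis
    proof (cases "i = j")
      case True
      then show ?thesis using D gj by simp
    next
      case False
      define c where "c = 1 - \<gamma> i / \<gamma> j"
      have c1: "1 - inverse (\<gamma> j) * \<gamma> i = c" by (simp add: c_def divide_inverse mult.commute)
      have "\<gamma> i / \<gamma> j \<noteq> 1" using gd i False gj by (auto simp: divide_eq_1_iff)
      then have c0: "c \<noteq> 0" by (simp add: c_def)
      have "(c * w i = \<delta> i) \<longleftrightarrow> (w i = inverse c * \<delta> i)" using c0 by (auto simp: field_simps)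
      then show ?thesis using D c1 False by (simp add: c_def)
    qed
  qed
  have P0: "?P 0 \<longleftrightarrow> w 0 = \<epsilon> * inverse (\<gamma> j)"
    by (simp add: Dlt_def w0vec_def dvec_def mult.commute)
  have idx: "idxset \<epsilon> q = (if \<epsilon>>0 then insert 0 {1..q} else {1..q})" by (auto simp: idxset_def)
  have allP: "(\<forall>i\<in>idxset \<epsilon> q. ?P i) \<longleftrightarrow> (\<epsilon> > 0 \<longrightarrow> ?P 0) \<and> (\<forall>i\<in>{1..q}. ?P i)"
    unfolding idx by auto
  have allP2: "(\<forall>i\<in>{1..q}. ?P i) \<longleftrightarrow> \<delta> j = 0 \<and> (\<forall>i\<in>{1..q}-{j}. w i = inverse (1 - \<gamma> i / \<gamma> j) * \<delta> i)"
  proof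
    assume a: "\<forall>i\<in>{1..q}. ?P i"
    show "\<delta> j = 0 \<and> (\<forall>i\<in>{1..q}-{j}. w i = inverse (1 - \<gamma> i / \<gamma> j) * \<delta> i)"
    proof
      show "\<delta> j = 0" using a j Pi[OF j] by simp
      show "\<forall>i\<in>{1..q}-{j}. w i = inverse (1 - \<gamma> i / \<gamma> j) * \<delta> i"
      proof
        fix i assume i: "i \<in> {1..q}-{j}"
        then show "w i = inverse (1 - \<gamma> i / \<gamma> j) * \<delta> i" using a Pi[of i] by auto
      qed
    qed
  next
    assume a: "\<delta> j = 0 \<and> (\<forall>i\<in>{1..q}-{j}. w i = inverse (1 - \<gamma> i / \<gamma> j) * \<delta> i)"
    show "\<forall>i\<in>{1..q}. ?P i"
    proof
      fix i assume i: "i \<in> {1..q}"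
      show "?P i" using Pi[OF i] a i by (cases "i = j") auto
    qed
  qed
  have Qeq: "Qstar \<gamma> \<epsilon> k q w = \<gamma> j * (w j)^2 + F"
    if ws: "w \<in> wspace \<epsilon> q" and e: "\<epsilon> > 0 \<longrightarrow> w 0 = \<epsilon> * inverse (\<gamma> j)"
      and z: "\<forall>i\<in>{1..q}-{j}. w i = inverse (1 - \<gamma> i / \<gamma> j) * \<delta> i"
  proof -
    have "(\<Sum>i=1..q. \<gamma> i * (w i)^2) = \<gamma> j * (w j)^2 + (\<Sum>i\<in>{1..q}-{j}. \<gamma> i * (w i)^2)"
      using j by (simp add: sum.remove)
    also have "(\<Sum>i\<in>{1..q}-{j}. \<gamma> i * (w i)^2) = (\<Sum>i\<in>{1..q}-{j}. \<gamma> i * (inverse (1 - \<gamma> i / \<gamma> j) * \<delta> i)^2)"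
      by (rule sum.cong) (use z in auto)
    finally have s: "(\<Sum>i=1..q. \<gamma> i * (w i)^2) = \<gamma> j * (w j)^2 + (\<Sum>i\<in>{1..q}-{j}. \<gamma> i * (inverse (1 - \<gamma> i / \<gamma> j) * \<delta> i)^2)" .
    have t: "2*\<epsilon>*w 0 = 2*\<epsilon>*(\<epsilon>*inverse(\<gamma> j))"
    proof (cases "\<epsilon> > 0")
      case True then show ?thesis using e by simp
    next
      case False then have "\<epsilon> = 0" using eps by simp
      then show ?thesis by simp
    qed
    show ?thesis unfolding Q_form[OF ws eps] s t F_def by simp
  qed
  show "w \<in> Wlam \<gamma> \<delta> \<epsilon> k q (inverse (\<gamma> j)) \<longleftrightarrow> w \<in> {w \<in> wspace \<epsilon> q. \<delta> j = 0 \<and> (\<epsilon> > 0 \<longrightarrow> w 0 = \<epsilon> * inverse (\<gamma> j)) \<and>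
       (\<forall>i\<in>{1..q}-{j}. w i = inverse (1 - \<gamma> i / \<gamma> j) * \<delta> i) \<and> \<gamma> j * (w j)^2 + F = 0}"
  proof -
    have "w \<in> Wlam \<gamma> \<delta> \<epsilon> k q (inverse (\<gamma> j)) \<longleftrightarrow>
       w \<in> wspace \<epsilon> q \<and> Qstar \<gamma> \<epsilon> k q w = 0 \<and> (\<forall>i\<in>idxset \<epsilon> q. ?P i)"
      by (simp add: Wlam_def Wset_def)
    also have "\<dots> \<longleftrightarrow> w \<in> wspace \<epsilon> q \<and> Qstar \<gamma> \<epsilon> k q w = 0 \<and> (\<epsilon> > 0 \<longrightarrow> w 0 = \<epsilon> * inverse (\<gamma> j))
        \<and> \<delta> j = 0 \<and> (\<forall>i\<in>{1..q}-{j}. w i = inverse (1 - \<gamma> i / \<gamma> j) * \<delta> i)"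
      unfolding allP allP2 P0 by blast
    also have "\<dots> \<longleftrightarrow> w \<in> {w \<in> wspace \<epsilon> q. \<delta> j = 0 \<and> (\<epsilon> > 0 \<longrightarrow> w 0 = \<epsilon> * inverse (\<gamma> j)) \<and>
       (\<forall>i\<in>{1..q}-{j}. w i = inverse (1 - \<gamma> i / \<gamma> j) * \<delta> i) \<and> \<gamma> j * (w j)^2 + F = 0}"
      using Qeq by auto
    finally show ?thesis .
  qed
qed

lemma boundary:
  fixes \<gamma> \<delta> :: "nat \<Rightarrow> real" and \<epsilon> k :: real and q j :: nat
  assumes j: "j \<in> {1..q}" and gj: "\<gamma> j \<noteq> 0" and gd: "\<forall>i\<in>{1..q}-{j}. \<gamma> i \<noteq> \<gamma> j"
    and eps: "\<epsilon> \<ge> 0" and nn: "\<forall>i\<in>{1..q}. 1 - \<gamma> i / \<gamma> j \<ge> 0"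
  defines "F \<equiv> (\<Sum>i\<in>{1..q}-{j}. \<gamma> i * (inverse (1 - \<gamma> i / \<gamma> j) * \<delta> i)^2)
                 + 2*\<epsilon>*(\<epsilon>*inverse(\<gamma> j)) - k"
  shows "(Wlam \<gamma> \<delta> \<epsilon> k q (inverse (\<gamma> j)) \<noteq> {} \<longleftrightarrow> \<delta> j = 0 \<and> - F / \<gamma> j \<ge> 0) \<and>
    (\<delta> j = 0 \<and> - F / \<gamma> j \<ge> 0 \<longrightarrow>
      What \<gamma> \<delta> \<epsilon> k q = Wlam \<gamma> \<delta> \<epsilon> k q (inverse (\<gamma> j)) \<and>
      Wlam \<gamma> \<delta> \<epsilon> k q (inverse (\<gamma> j)) =
        {w \<in> wspace \<epsilon> q. (\<epsilon> > 0 \<longrightarrow> w 0 = \<epsilon> * inverse (\<gamma> j)) \<and> (w j)^2 = - F / \<gamma> j \<and>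
           (\<forall>i\<in>{1..q}-{j}. w i = inverse (1 - \<gamma> i / \<gamma> j) * \<delta> i)})"
proof -
  note C = Wlam_char[OF j gj gd eps, of \<delta> k, folded F_def]
  have eqv: "\<gamma> j * t^2 + F = 0 \<longleftrightarrow> t^2 = - F / \<gamma> j" for t
    using gj by (auto simp: field_simps)
  have ne: "Wlam \<gamma> \<delta> \<epsilon> k q (inverse (\<gamma> j)) \<noteq> {} \<longleftrightarrow> \<delta> j = 0 \<and> - F / \<gamma> j \<ge> 0"
  proof
    assume "Wlam \<gamma> \<delta> \<epsilon> k q (inverse (\<gamma> j)) \<noteq> {}"
    then obtain w where "w \<in> Wlam \<gamma> \<delta> \<epsilon> k q (inverse (\<gamma> j))" by blast
    then have "\<delta> j = 0" "(w j)^2 = - F / \<gamma> j" unfolding C eqv by auto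
    then show "\<delta> j = 0 \<and> - F / \<gamma> j \<ge> 0" by (metis zero_le_power2)
  next
    assume a: "\<delta> j = 0 \<and> - F / \<gamma> j \<ge> 0"
    define w where "w = (\<lambda>i. if i = 0 then (if \<epsilon> > 0 then \<epsilon> * inverse (\<gamma> j) else 0)
        else if i = j then sqrt (- F / \<gamma> j)
        else if i \<le> q then inverse (1 - \<gamma> i / \<gamma> j) * \<delta> i else 0)"
    have ws: "w \<in> wspace \<epsilon> q" using j by (auto simp: wspace_def idxset_def w_def)
    have "(w j)^2 = - F / \<gamma> j" using a j by (simp add: w_def)
    moreover have "\<forall>i\<in>{1..q}-{j}. w i = inverse (1 - \<gamma> i / \<gamma> j) * \<delta> i" by (auto simp: w_def)
    moreover have "\<epsilon> > 0 \<longrightarrow> w 0 = \<epsilon> * inverse (\<gamma> j)" by (simp add: w_def)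
    ultimately have "w \<in> Wlam \<gamma> \<delta> \<epsilon> k q (inverse (\<gamma> j))" unfolding C eqv using ws a by blast
    then show "Wlam \<gamma> \<delta> \<epsilon> k q (inverse (\<gamma> j)) \<noteq> {}" by blast
  qed
  have nn': "\<forall>i\<in>idxset \<epsilon> q. 1 - inverse (\<gamma> j) * Dlt \<gamma> i \<ge> 0"
  proof
    fix i assume i: "i \<in> idxset \<epsilon> q"
    show "1 - inverse (\<gamma> j) * Dlt \<gamma> i \<ge> 0"
    proof (cases "i = 0")
      case True then show ?thesis by (simp add: Dlt_def)
    next
      case False
      then have "i \<in> {1..q}" using i by (auto simp: idxset_def split: if_splits)
      then show ?thesis using nn False by (simp add: Dlt_def divide_inverse mult.commute)
    qed
  qed
  show ?thesis
  proof (intro conjI impI)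
    show "Wlam \<gamma> \<delta> \<epsilon> k q (inverse (\<gamma> j)) \<noteq> {} \<longleftrightarrow> \<delta> j = 0 \<and> - F / \<gamma> j \<ge> 0" by (rule ne)
  next
    assume a: "\<delta> j = 0 \<and> - F / \<gamma> j \<ge> 0"
    show "What \<gamma> \<delta> \<epsilon> k q = Wlam \<gamma> \<delta> \<epsilon> k q (inverse (\<gamma> j))"
      by (rule What_eq[OF nn']) (use ne a in blast)
    show "Wlam \<gamma> \<delta> \<epsilon> k q (inverse (\<gamma> j)) =
        {w \<in> wspace \<epsilon> q. (\<epsilon> > 0 \<longrightarrow> w 0 = \<epsilon> * inverse (\<gamma> j)) \<and> (w j)^2 = - F / \<gamma> j \<and>
           (\<forall>i\<in>{1..q}-{j}. w i = inverse (1 - \<gamma> i / \<gamma> j) * \<delta> i)}"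
      unfolding C eqv using a by auto
  qed
qed

theorem proposition8p3:
  fixes \<gamma> \<delta> :: "nat \<Rightarrow> real" and \<epsilon> k :: real and q :: nat
  assumes q1: "q \<ge> 1"
    and gdec: "\<forall>i j. 1 \<le> i \<longrightarrow> i < j \<longrightarrow> j \<le> q \<longrightarrow> \<gamma> j < \<gamma> i"
    and gnz: "\<forall>i\<in>{1..q}. \<gamma> i \<noteq> 0"
    and g1: "\<gamma> 1 > 0"
    and dnn: "\<forall>i\<in>{1..q}. \<delta> i \<ge> 0"
    and eps: "\<epsilon> \<ge> 0"
    and Wne: "Wset \<gamma> \<epsilon> k q \<noteq> {}"
  shows
   "(Wlam \<gamma> \<delta> \<epsilon> k q (inverse (\<gamma> 1)) \<noteq> {} \<longleftrightarrow> \<delta> 1 = 0 \<and> f1 \<gamma> \<delta> \<epsilon> k q \<le> 0) \<and>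
    (\<delta> 1 = 0 \<and> f1 \<gamma> \<delta> \<epsilon> k q \<le> 0 \<longrightarrow>
       What \<gamma> \<delta> \<epsilon> k q = Wlam \<gamma> \<delta> \<epsilon> k q (inverse (\<gamma> 1)) \<and>
       Wlam \<gamma> \<delta> \<epsilon> k q (inverse (\<gamma> 1)) =
         {w \<in> wspace \<epsilon> q. (\<epsilon> > 0 \<longrightarrow> w 0 = yhat1 \<gamma> \<epsilon>) \<and>
            (w 1)\<^sup>2 = - f1 \<gamma> \<delta> \<epsilon> k q / \<gamma> 1 \<and>
            (\<forall>i\<in>{2..q}. w i = zhat1 \<gamma> \<delta> i)}) \<and>
    (\<gamma> q < 0 \<longrightarrow>
      (Wlam \<gamma> \<delta> \<epsilon> k q (inverse (\<gamma> q)) \<noteq> {} \<longleftrightarrow> \<delta> q = 0 \<and> fq \<gamma> \<delta> \<epsilon> k q \<ge> 0) \<and>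
      (\<delta> q = 0 \<and> fq \<gamma> \<delta> \<epsilon> k q \<ge> 0 \<longrightarrow>
         What \<gamma> \<delta> \<epsilon> k q = Wlam \<gamma> \<delta> \<epsilon> k q (inverse (\<gamma> q)) \<and>
         Wlam \<gamma> \<delta> \<epsilon> k q (inverse (\<gamma> q)) =
           {w \<in> wspace \<epsilon> q. (\<epsilon> > 0 \<longrightarrow> w 0 = yhatq \<gamma> \<epsilon> q) \<and>
              (\<forall>i\<in>{1..q-1}. w i = zhatq \<gamma> \<delta> q i) \<and>
              (w q)\<^sup>2 = fq \<gamma> \<delta> \<epsilon> k q / (- \<gamma> q)}))"
proof -
  have q1in: "1 \<in> {1..q}" and qin: "q \<in> {1..q}" using q1 by auto
  have le1: "\<gamma> i \<le> \<gamma> 1" if "i \<in> {1..q}" for i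
  proof (cases "i = 1")
    case False
    then have "1 < i" "i \<le> q" using that by auto
    then show ?thesis using gdec by (meson less_imp_le order_refl)
  qed simp
  have leq: "\<gamma> q \<le> \<gamma> i" if "i \<in> {1..q}" for i
  proof (cases "i = q")
    case False
    then have "1 \<le> i" "i < q" using that by auto
    then show ?thesis using gdec by (meson less_imp_le order_refl)
  qed simp
  have gd1: "\<forall>i\<in>{1..q}-{1}. \<gamma> i \<noteq> \<gamma> 1"
  proof
    fix i assume "i \<in> {1..q}-{1}"
    then have "1 < i" "i \<le> q" by auto
    then have "\<gamma> i < \<gamma> 1" using gdec by (meson order_refl)
    then show "\<gamma> i \<noteq> \<gamma> 1" by simp
  qed
  have gdq: "\<forall>i\<in>{1..q}-{q}. \<gamma> i \<noteq> \<gamma> q"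
  proof
    fix i assume "i \<in> {1..q}-{q}"
    then have "1 \<le> i" "i < q" by auto
    then have "\<gamma> q < \<gamma> i" using gdec by (meson order_refl)
    then show "\<gamma> i \<noteq> \<gamma> q" by simp
  qed
  have nn1: "\<forall>i\<in>{1..q}. 1 - \<gamma> i / \<gamma> 1 \<ge> 0"
  proof
    fix i assume "i \<in> {1..q}"
    then have "\<gamma> i \<le> \<gamma> 1" by (rule le1)
    then have "\<gamma> i / \<gamma> 1 \<le> 1" using g1 by (simp add: divide_le_eq)
    then show "1 - \<gamma> i / \<gamma> 1 \<ge> 0" by simp
  qed
  have S1: "{1..q}-{1} = {2..q}" by auto
  have Sq: "{1..q}-{q} = {1..q-1}" using q1 by auto
  have g1ne: "\<gamma> 1 \<noteq> 0" using g1 by simp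
  note B1 = boundary[OF q1in g1ne gd1 eps nn1, of \<delta> k]
  have F1: "(\<Sum>i\<in>{1..q}-{1}. \<gamma> i * (inverse (1 - \<gamma> i / \<gamma> 1) * \<delta> i)^2)
                 + 2*\<epsilon>*(\<epsilon>*inverse(\<gamma> 1)) - k = f1 \<gamma> \<delta> \<epsilon> k q"
    unfolding S1 f1_def zhat1_def yhat1_def by simp
  have c1: "(- f1 \<gamma> \<delta> \<epsilon> k q / \<gamma> 1 \<ge> 0) \<longleftrightarrow> f1 \<gamma> \<delta> \<epsilon> k q \<le> 0"
    using g1 by (simp add: divide_le_eq)
  have P1: "(Wlam \<gamma> \<delta> \<epsilon> k q (inverse (\<gamma> 1)) \<noteq> {} \<longleftrightarrow> \<delta> 1 = 0 \<and> f1 \<gamma> \<delta> \<epsilon> k q \<le> 0) \<and>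
    (\<delta> 1 = 0 \<and> f1 \<gamma> \<delta> \<epsilon> k q \<le> 0 \<longrightarrow>
       What \<gamma> \<delta> \<epsilon> k q = Wlam \<gamma> \<delta> \<epsilon> k q (inverse (\<gamma> 1)) \<and>
       Wlam \<gamma> \<delta> \<epsilon> k q (inverse (\<gamma> 1)) =
         {w \<in> wspace \<epsilon> q. (\<epsilon> > 0 \<longrightarrow> w 0 = yhat1 \<gamma> \<epsilon>) \<and>
            (w 1)\<^sup>2 = - f1 \<gamma> \<delta> \<epsilon> k q / \<gamma> 1 \<and>
            (\<forall>i\<in>{2..q}. w i = zhat1 \<gamma> \<delta> i)})"
    using B1[unfolded F1, unfolded S1 c1] unfolding yhat1_def zhat1_def by blast
  have P2: "\<gamma> q < 0 \<longrightarrow>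
      (Wlam \<gamma> \<delta> \<epsilon> k q (inverse (\<gamma> q)) \<noteq> {} \<longleftrightarrow> \<delta> q = 0 \<and> fq \<gamma> \<delta> \<epsilon> k q \<ge> 0) \<and>
      (\<delta> q = 0 \<and> fq \<gamma> \<delta> \<epsilon> k q \<ge> 0 \<longrightarrow>
         What \<gamma> \<delta> \<epsilon> k q = Wlam \<gamma> \<delta> \<epsilon> k q (inverse (\<gamma> q)) \<and>
         Wlam \<gamma> \<delta> \<epsilon> k q (inverse (\<gamma> q)) =
           {w \<in> wspace \<epsilon> q. (\<epsilon> > 0 \<longrightarrow> w 0 = yhatq \<gamma> \<epsilon> q) \<and>
              (\<forall>i\<in>{1..q-1}. w i = zhatq \<gamma> \<delta> q i) \<and>
              (w q)\<^sup>2 = fq \<gamma> \<delta> \<epsilon> k q / (- \<gamma> q)})"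
  proof
    assume gq: "\<gamma> q < 0"
    have nnq: "\<forall>i\<in>{1..q}. 1 - \<gamma> i / \<gamma> q \<ge> 0"
    proof
      fix i assume "i \<in> {1..q}"
      then have "\<gamma> q \<le> \<gamma> i" by (rule leq)
      then have "\<gamma> i / \<gamma> q \<le> 1" using gq by (simp add: divide_le_eq)
      then show "1 - \<gamma> i / \<gamma> q \<ge> 0" by simp
    qed
    have gqne: "\<gamma> q \<noteq> 0" using gq by simp
    note Bq = boundary[OF qin gqne gdq eps nnq, of \<delta> k]
    have Fq: "(\<Sum>i\<in>{1..q}-{q}. \<gamma> i * (inverse (1 - \<gamma> i / \<gamma> q) * \<delta> i)^2)
                 + 2*\<epsilon>*(\<epsilon>*inverse(\<gamma> q)) - k = fq \<gamma> \<delta> \<epsilon> k q"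
      unfolding Sq fq_def zhatq_def yhatq_def by simp
    have cq: "(- fq \<gamma> \<delta> \<epsilon> k q / \<gamma> q \<ge> 0) \<longleftrightarrow> fq \<gamma> \<delta> \<epsilon> k q \<ge> 0"
      using gq by (simp add: divide_le_eq)
    have eq: "- fq \<gamma> \<delta> \<epsilon> k q / \<gamma> q = fq \<gamma> \<delta> \<epsilon> k q / (- \<gamma> q)" by simp
    have sets: "{w \<in> wspace \<epsilon> q. (\<epsilon> > 0 \<longrightarrow> w 0 = \<epsilon> * inverse (\<gamma> q)) \<and> (w q)^2 = fq \<gamma> \<delta> \<epsilon> k q / (- \<gamma> q) \<and>
           (\<forall>i\<in>{1..q-1}. w i = inverse (1 - \<gamma> i / \<gamma> q) * \<delta> i)} =
        {w \<in> wspace \<epsilon> q. (\<epsilon> > 0 \<longrightarrow> w 0 = yhatq \<gamma> \<epsilon> q) \<and>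
              (\<forall>i\<in>{1..q-1}. w i = zhatq \<gamma> \<delta> q i) \<and>
              (w q)\<^sup>2 = fq \<gamma> \<delta> \<epsilon> k q / (- \<gamma> q)}"
      by (auto simp: yhatq_def zhatq_def)
    show "(Wlam \<gamma> \<delta> \<epsilon> k q (inverse (\<gamma> q)) \<noteq> {} \<longleftrightarrow> \<delta> q = 0 \<and> fq \<gamma> \<delta> \<epsilon> k q \<ge> 0) \<and>
      (\<delta> q = 0 \<and> fq \<gamma> \<delta> \<epsilon> k q \<ge> 0 \<longrightarrow>
         What \<gamma> \<delta> \<epsilon> k q = Wlam \<gamma> \<delta> \<epsilon> k q (inverse (\<gamma> q)) \<and>
         Wlam \<gamma> \<delta> \<epsilon> k q (inverse (\<gamma> q)) =
           {w \<in> wspace \<epsilon> q. (\<epsilon> > 0 \<longrightarrow> w 0 = yhatq \<gamma> \<epsilon> q) \<and>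
              (\<forall>i\<in>{1..q-1}. w i = zhatq \<gamma> \<delta> q i) \<and>
              (w q)\<^sup>2 = fq \<gamma> \<delta> \<epsilon> k q / (- \<gamma> q)})"
      using Bq[unfolded Fq, unfolded Sq cq, unfolded eq] unfolding sets by blast
  qed
  show ?thesis using P1 P2 by blast
qed

end
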